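(* Let $G$ be a non-trivial graph with $m$ edges. Then $$ H(\mathcal{L}(G)) \leq \frac{m}{2} , $$ with equality if and only if each connected component of $G$ is regular or biregular.
   Context: All graphs are finite and simple. A graph is non-trivial if each of its connected components has at least two edges. $d_u$ is the degree of $u$. The harmonic index is $H(G)=\sum_{uv\in E(G)}\frac{2}{d_u+d_v}$. The line graph $\mathcal{L}(G)$ has vertex set $E(G)$, two vertices being adjacent iff the corresponding edges share an end vertex in $G$. A graph is biregular if it is bipartite and all vertices in the same part of the bipartition have the same degree. *)

theory Defs
  imports Main "HOL-Library.Disjoint_Sets" Complex_Main
begin

definition simple_graph :: "'a set \<Rightarrow> 'a set set \<Rightarrow> bool" where
  "simple_graph V E \<longleftrightarrow> finite V \<and> (\<forall>e\<in>E. \<exists>u v. e = {u, v} \<and> u \<noteq> v \<and> u \<in> V \<and> v \<in> V)"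

definition degree :: "'a set set \<Rightarrow> 'a \<Rightarrow> nat" where
  "degree E u = card {e \<in> E. u \<in> e}"

definition adjacent :: "'a set set \<Rightarrow> 'a \<Rightarrow> 'a \<Rightarrow> bool" where
  "adjacent E u v \<longleftrightarrow> u \<noteq> v \<and> {u, v} \<in> E"

definition component :: "'a set set \<Rightarrow> 'a \<Rightarrow> 'a set" where
  "component E v = {w. (adjacent E)\<^sup>*\<^sup>* v w}"

definition components :: "'a set \<Rightarrow> 'a set set \<Rightarrow> 'a set set" where
  "components V E = component E ` V"

definition comp_edges :: "'a set set \<Rightarrow> 'a set \<Rightarrow> 'a set set" where
  "comp_edges E C = {e \<in> E. e \<subseteq> C}"

definition nontrivial :: "'a set \<Rightarrow> 'a set set \<Rightarrow> bool" where
  "nontrivial V E \<longleftrightarrow> (\<forall>C \<in> components V E. card (comp_edges E C) \<ge> 2)"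

definition harmonic_index :: "'a set set \<Rightarrow> real" where
  "harmonic_index E = (\<Sum>e\<in>E. 2 / real (\<Sum>u\<in>e. degree E u))"

text \<open>Edge set of the line graph (its vertex set is E).\<close>
definition line_graph_edges :: "'a set set \<Rightarrow> 'a set set set" where
  "line_graph_edges E = {{e, f} | e f. e \<in> E \<and> f \<in> E \<and> e \<noteq> f \<and> e \<inter> f \<noteq> {}}"

definition regular_on :: "'a set set \<Rightarrow> 'a set \<Rightarrow> bool" where
  "regular_on E C \<longleftrightarrow> (\<exists>k. \<forall>v\<in>C. degree E v = k)"

definition biregular_on :: "'a set set \<Rightarrow> 'a set \<Rightarrow> bool" where
  "biregular_on E C \<longleftrightarrow> (\<exists>A B k l. A \<union> B = C \<and> A \<inter> B = {} \<and>
     (\<forall>e \<in> comp_edges E C. card (e \<inter> A) = 1 \<and> card (e \<inter> B) = 1) \<and>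
     (\<forall>v\<in>A. degree E v = k) \<and> (\<forall>v\<in>B. degree E v = l))"

end

theory Submission
  imports Defs
begin

lemma sg_edge: "simple_graph V E \<Longrightarrow> e \<in> E \<Longrightarrow> \<exists>u v. e = {u, v} \<and> u \<noteq> v \<and> u \<in> V \<and> v \<in> V"
  unfolding simple_graph_def by blast
lemma sg_finE: "simple_graph V E \<Longrightarrow> finite E"
proof -
  assume a: "simple_graph V E"
  have "E \<subseteq> Pow V"
  proof
    fix e assume "e \<in> E"
    then obtain u v where "e = {u, v}" "u \<in> V" "v \<in> V" using sg_edge[OF a] by blast
    then show "e \<in> Pow V" by simp
  qed
  moreover have "finite V" using a unfolding simple_graph_def by simp
  ultimately show ?thesis by (simp add: finite_subset)
qed
lemma finLE: "finite E \<Longrightarrow> finite (line_graph_edges E)"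
proof -
  assume "finite E"
  moreover have "line_graph_edges E \<subseteq> Pow E" unfolding line_graph_edges_def by blast
  ultimately show ?thesis by (simp add: finite_subset)
qed

lemma LE_I: "e \<in> E \<Longrightarrow> f \<in> E \<Longrightarrow> e \<noteq> f \<Longrightarrow> e \<inter> f \<noteq> {} \<Longrightarrow> {e, f} \<in> line_graph_edges E"
  unfolding line_graph_edges_def by blast

lemma LE_E: "F \<in> line_graph_edges E \<Longrightarrow> (\<And>e f. F = {e, f} \<Longrightarrow> e \<in> E \<Longrightarrow> f \<in> E \<Longrightarrow> e \<noteq> f \<Longrightarrow> e \<inter> f \<noteq> {} \<Longrightarrow> P) \<Longrightarrow> P"
  unfolding line_graph_edges_def by blast

lemma dL_formula:
  assumes sg: "simple_graph V E" and e: "{u, v} \<in> E" and uv: "u \<noteq> v"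
  shows "degree (line_graph_edges E) {u, v} + 2 = degree E u + degree E v"
proof -
  define e0 where "e0 = {u, v}"
  define S where "S = {f \<in> E. f \<noteq> e0 \<and> e0 \<inter> f \<noteq> {}}"
  have fE: "finite E" using sg_finE[OF sg] .
  have inj: "inj_on (\<lambda>f. {e0, f}) S" unfolding S_def inj_on_def by (auto simp: doubleton_eq_iff)
  have img: "(\<lambda>f. {e0, f}) ` S = {F \<in> line_graph_edges E. e0 \<in> F}"
  proof (rule set_eqI, rule iffI)
    fix F assume "F \<in> (\<lambda>f. {e0, f}) ` S"
    then obtain f where f: "f \<in> S" "F = {e0, f}" by blast
    have "f \<in> E" "f \<noteq> e0" "e0 \<inter> f \<noteq> {}" using f(1) unfolding S_def by auto
    then have "{e0, f} \<in> line_graph_edges E" using LE_I[of e0 E f] e unfolding e0_def by auto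
    then show "F \<in> {F \<in> line_graph_edges E. e0 \<in> F}" using f(2) by simp
  next
    fix F assume "F \<in> {F \<in> line_graph_edges E. e0 \<in> F}"
    then have F1: "F \<in> line_graph_edges E" and F2: "e0 \<in> F" by auto
    obtain g h where F: "F = {g, h}" "g \<in> E" "h \<in> E" "g \<noteq> h" "g \<inter> h \<noteq> {}"
      using LE_E[OF F1] by metis
    show "F \<in> (\<lambda>f. {e0, f}) ` S"
    proof (cases "e0 = g")
      case True
      then have "h \<in> S" using F unfolding S_def by auto
      moreover have "F = {e0, h}" using F True by simp
      ultimately show ?thesis by (rule rev_image_eqI)
    next
      case False
      then have "e0 = h" using F F2 by auto
      then have "g \<in> S" using F unfolding S_def by auto
      moreover have "F = {e0, g}" using F \<open>e0 = h\<close> by auto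
      ultimately show ?thesis by (rule rev_image_eqI)
    qed
  qed
  have c1: "degree (line_graph_edges E) e0 = card S"
    unfolding degree_def img[symmetric] using card_image[OF inj] by simp
  define Su where "Su = {f \<in> E. u \<in> f}"
  define Sv where "Sv = {f \<in> E. v \<in> f}"
  have SS: "S = (Su - {e0}) \<union> (Sv - {e0})" unfolding S_def Su_def Sv_def e0_def by auto
  have disj: "(Su - {e0}) \<inter> (Sv - {e0}) = {}"
  proof (rule ccontr)
    assume "(Su - {e0}) \<inter> (Sv - {e0}) \<noteq> {}"
    then obtain f where f: "f \<in> E" "u \<in> f" "v \<in> f" "f \<noteq> e0" unfolding Su_def Sv_def by blast
    obtain a b where "f = {a, b}" using sg_edge[OF sg f(1)] by blast
    then show False using f uv unfolding e0_def by auto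
  qed
  have fu: "finite Su" "finite Sv" using fE unfolding Su_def Sv_def by auto
  have "card S = card (Su - {e0}) + card (Sv - {e0})"
    unfolding SS using card_Un_disjoint[OF _ _ disj] fu by auto
  moreover have "card (Su - {e0}) + 1 = card Su"
  proof -
    have "e0 \<in> Su" using e unfolding Su_def e0_def by simp
    then have "card Su > 0" using fu card_gt_0_iff by blast
    then show ?thesis using card_Diff_singleton[OF \<open>e0 \<in> Su\<close>] by simp
  qed
  moreover have "card (Sv - {e0}) + 1 = card Sv"
  proof -
    have "e0 \<in> Sv" using e unfolding Sv_def e0_def by simp
    then have "card Sv > 0" using fu card_gt_0_iff by blast
    then show ?thesis using card_Diff_singleton[OF \<open>e0 \<in> Sv\<close>] by simp
  qed
  moreover have "degree E u = card Su" unfolding degree_def Su_def by simp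
  moreover have "degree E v = card Sv" unfolding degree_def Sv_def by simp
  ultimately show ?thesis using c1 unfolding e0_def by linarith
qed

lemma comp_sub:
  assumes "\<forall>f\<in>E. f \<noteq> {u, v} \<longrightarrow> f \<inter> {u, v} = {}" and "{u, v} \<in> E"
  shows "(adjacent E)\<^sup>*\<^sup>* u y \<Longrightarrow> y \<in> {u, v}"
proof (induction rule: rtranclp_induct)
  case base
  then show ?case by simp
next
  case (step y z)
  then have "{y, z} \<in> E" unfolding adjacent_def by blast
  moreover have "{y, z} \<inter> {u, v} \<noteq> {}" using step.IH by blast
  ultimately have "{y, z} = {u, v}" using assms(1) by metis
  then show ?case by blast
qed

lemma has_nb:
  assumes sg: "simple_graph V E" and nt: "nontrivial V E" and e: "e \<in> E"
  shows "\<exists>f\<in>E. f \<noteq> e \<and> e \<inter> f \<noteq> {}"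
proof (rule ccontr)
  assume na: "\<not> ?thesis"
  obtain u v where uv: "e = {u, v}" "u \<noteq> v" "u \<in> V" "v \<in> V" using sg_edge[OF sg e] by blast
  have "component E u \<in> components V E" unfolding components_def using uv by blast
  then have c2: "card (comp_edges E (component E u)) \<ge> 2" using nt unfolding nontrivial_def by blast
  have h: "\<forall>f\<in>E. f \<noteq> {u, v} \<longrightarrow> f \<inter> {u, v} = {}" using na uv(1) by blast
  have e': "{u, v} \<in> E" using e uv(1) by simp
  have "component E u \<subseteq> {u, v}"
  proof
    fix y assume "y \<in> component E u"
    then have "(adjacent E)\<^sup>*\<^sup>* u y" unfolding component_def by simp
    then show "y \<in> {u, v}" by (rule comp_sub[OF h e'])
  qed
  then have "comp_edges E (component E u) \<subseteq> {e}"
  proof -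
    assume cs: "component E u \<subseteq> {u, v}"
    show ?thesis
    proof
      fix f assume "f \<in> comp_edges E (component E u)"
      then have f: "f \<in> E" "f \<subseteq> {u, v}" using cs unfolding comp_edges_def by auto
      obtain a b where "f = {a, b}" "a \<noteq> b" using sg_edge[OF sg f(1)] by blast
      then have "f = e" using f uv by auto
      then show "f \<in> {e}" by simp
    qed
  qed
  then have "card (comp_edges E (component E u)) \<le> 1"
    using card_mono[of "{e}" "comp_edges E (component E u)"] by simp
  then show False using c2 by simp
qed

lemma dL_pos:
  assumes sg: "simple_graph V E" and nt: "nontrivial V E" and e: "e \<in> E"
  shows "degree (line_graph_edges E) e > 0"
proof -
  obtain f where f: "f \<in> E" "f \<noteq> e" "e \<inter> f \<noteq> {}" using has_nb[OF assms] by blast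
  have "{e, f} \<in> {F \<in> line_graph_edges E. e \<in> F}" using LE_I[of e E f] f e by blast
  moreover have "finite (line_graph_edges E)" using finLE sg_finE[OF sg] by blast
  ultimately show ?thesis unfolding degree_def
    by (subst card_gt_0_iff) auto
qed

lemma pw:
  fixes a b :: real
  assumes "a > 0" "b > 0"
  shows "2 / (a + b) \<le> 1/(2*a) + 1/(2*b) \<and> (2 / (a + b) = 1/(2*a) + 1/(2*b) \<longleftrightarrow> a = b)"
proof -
  have eq: "1/(2*a) + 1/(2*b) - 2 / (a + b) = (a - b)^2 / (2*a*b*(a+b))"
    using assms by (simp add: field_simps power2_eq_square)
  have "(a - b)^2 / (2*a*b*(a+b)) \<ge> 0" using assms by simp
  moreover have "(a - b)^2 / (2*a*b*(a+b)) = 0 \<longleftrightarrow> a = b" using assms by simp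
  ultimately show ?thesis using eq by linarith
qed


lemma edge_other:
  assumes sg: "simple_graph V E" and e: "e \<in> E" and x: "x \<in> e"
  shows "\<exists>u. e = {x, u} \<and> x \<noteq> u"
proof -
  obtain a b where ab: "e = {a, b}" "a \<noteq> b" using sg_edge[OF sg e] by blast
  show ?thesis
  proof (cases "x = a")
    case True
    then show ?thesis using ab by blast
  next
    case False
    then have "x = b" using x ab by simp
    then show ?thesis using ab by (metis insert_commute)
  qed
qed

lemma edge_ne:
  assumes sg: "simple_graph V E" and e: "{w, u} \<in> E"
  shows "w \<noteq> u"
proof
  assume "w = u"
  then have "{w} \<in> E" using e by simp
  then obtain a b where ab: "{w} = {a, b}" "a \<noteq> b" using sg_edge[OF sg] by blast
  then have "a \<in> {w}" "b \<in> {w}" by (simp_all add: ab(1))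
  then show False using ab(2) by simp
qed

definition Nb :: "'a set set \<Rightarrow> bool" where
  "Nb E \<longleftrightarrow> (\<forall>w u v. {w, u} \<in> E \<longrightarrow> {w, v} \<in> E \<longrightarrow> degree E u = degree E v)"

lemma Q2_Nb:
  assumes sg: "simple_graph V E"
  shows "(\<forall>e\<in>E. \<forall>f\<in>E. e \<noteq> f \<longrightarrow> e \<inter> f \<noteq> {} \<longrightarrow>
           degree (line_graph_edges E) e = degree (line_graph_edges E) f) \<longleftrightarrow> Nb E"
proof
  assume q: "\<forall>e\<in>E. \<forall>f\<in>E. e \<noteq> f \<longrightarrow> e \<inter> f \<noteq> {} \<longrightarrow>
           degree (line_graph_edges E) e = degree (line_graph_edges E) f"
  show "Nb E" unfolding Nb_def
  proof (intro allI impI)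
    fix w u v assume wu: "{w, u} \<in> E" and wv: "{w, v} \<in> E"
    show "degree E u = degree E v"
    proof (cases "u = v")
      case True then show ?thesis by simp
    next
      case False
      have n1: "w \<noteq> u" using edge_ne[OF sg wu] .
      have n2: "w \<noteq> v" using edge_ne[OF sg wv] .
      have "{w, u} \<noteq> {w, v}" using False n1 by (metis doubleton_eq_iff)
      moreover have "{w, u} \<inter> {w, v} \<noteq> {}" by blast
      ultimately have "degree (line_graph_edges E) {w, u} = degree (line_graph_edges E) {w, v}"
        by (rule q[rule_format, OF wu wv])
      moreover have "degree (line_graph_edges E) {w, u} + 2 = degree E w + degree E u"
        using dL_formula[OF sg wu n1] .
      moreover have "degree (line_graph_edges E) {w, v} + 2 = degree E w + degree E v"
        using dL_formula[OF sg wv n2] .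
      ultimately show ?thesis by linarith
    qed
  qed
next
  assume nb: "Nb E"
  show "\<forall>e\<in>E. \<forall>f\<in>E. e \<noteq> f \<longrightarrow> e \<inter> f \<noteq> {} \<longrightarrow>
           degree (line_graph_edges E) e = degree (line_graph_edges E) f"
  proof (intro ballI impI)
    fix e f assume e: "e \<in> E" and f: "f \<in> E" and "e \<noteq> f" and "e \<inter> f \<noteq> {}"
    then obtain x where x: "x \<in> e" "x \<in> f" by blast
    obtain u where u: "e = {x, u}" "x \<noteq> u" using edge_other[OF sg e x(1)] by blast
    obtain v where v: "f = {x, v}" "x \<noteq> v" using edge_other[OF sg f x(2)] by blast
    have xu: "{x, u} \<in> E" using e u(1) by simp
    have xv: "{x, v} \<in> E" using f v(1) by simp
    have "degree E u = degree E v" using nb[unfolded Nb_def, rule_format, OF xu xv] .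
    moreover have "degree (line_graph_edges E) {x, u} + 2 = degree E x + degree E u"
      using dL_formula[OF sg xu u(2)] .
    moreover have "degree (line_graph_edges E) {x, v} + 2 = degree E x + degree E v"
      using dL_formula[OF sg xv v(2)] .
    ultimately show "degree (line_graph_edges E) e = degree (line_graph_edges E) f"
      using u(1) v(1) by simp
  qed
qed

lemma in_comp: "{w, u} \<in> E \<Longrightarrow> w \<noteq> u \<Longrightarrow> u \<in> component E w"
  unfolding component_def adjacent_def by (simp add: r_into_rtranclp)

lemma self_comp: "w \<in> component E w"
  unfolding component_def by simp

lemma Nb_from_comp:
  assumes sg: "simple_graph V E"
    and rc: "\<forall>C\<in>components V E. regular_on E C \<or> biregular_on E C"
  shows "Nb E"
  unfolding Nb_def
proof (intro allI impI)
  fix w u v assume wu: "{w, u} \<in> E" and wv: "{w, v} \<in> E"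
  have n1: "w \<noteq> u" using edge_ne[OF sg wu] .
  have n2: "w \<noteq> v" using edge_ne[OF sg wv] .
  have wV: "w \<in> V"
  proof -
    obtain a b where ab: "{w, u} = {a, b}" "a \<in> V" "b \<in> V" using sg_edge[OF sg wu] by blast
    have "w \<in> {a, b}" using ab(1)[symmetric] by (simp only: insertI1)
    then show ?thesis using ab by blast
  qed
  define C where "C = component E w"
  have CC: "C \<in> components V E" unfolding components_def C_def using wV by blast
  have uC: "u \<in> C" and vC: "v \<in> C" and wC: "w \<in> C"
    unfolding C_def using in_comp[OF wu n1] in_comp[OF wv n2] self_comp by auto
  have ce1: "{w, u} \<in> comp_edges E C" unfolding comp_edges_def using wu uC wC by simp
  have ce2: "{w, v} \<in> comp_edges E C" unfolding comp_edges_def using wv vC wC by simp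
  from rc CC have "regular_on E C \<or> biregular_on E C" by blast
  then show "degree E u = degree E v"
  proof
    assume "regular_on E C"
    then obtain k where "\<forall>v\<in>C. degree E v = k" unfolding regular_on_def by blast
    then show ?thesis using uC vC by simp
  next
    assume "biregular_on E C"
    then obtain A B k l where AB: "A \<union> B = C" "A \<inter> B = {}"
      "\<forall>e \<in> comp_edges E C. card (e \<inter> A) = 1 \<and> card (e \<inter> B) = 1"
      "\<forall>v\<in>A. degree E v = k" "\<forall>v\<in>B. degree E v = l"
      unfolding biregular_on_def by blast
    have cA1: "card ({w, u} \<inter> A) = 1" "card ({w, v} \<inter> A) = 1" using AB(3) ce1 ce2 by auto
    have cB1: "card ({w, u} \<inter> B) = 1" "card ({w, v} \<inter> B) = 1" using AB(3) ce1 ce2 by auto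
    show ?thesis
    proof (cases "w \<in> A")
      case True
      have "u \<notin> A"
      proof
        assume "u \<in> A" then have "{w, u} \<inter> A = {w, u}" using True by auto
        then show False using cA1(1) n1 by simp
      qed
      moreover have "v \<notin> A"
      proof
        assume "v \<in> A" then have "{w, v} \<inter> A = {w, v}" using True by auto
        then show False using cA1(2) n2 by simp
      qed
      ultimately have "u \<in> B" "v \<in> B" using uC vC AB(1) by auto
      then show ?thesis using AB(5) by simp
    next
      case False
      then have wB: "w \<in> B" using wC AB(1) by auto
      have "u \<notin> B"
      proof
        assume "u \<in> B" then have "{w, u} \<inter> B = {w, u}" using wB by auto
        then show False using cB1(1) n1 by simp
      qed
      moreover have "v \<notin> B"
      proof
        assume "v \<in> B" then have "{w, v} \<inter> B = {w, v}" using wB by auto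
        then show False using cB1(2) n2 by simp
      qed
      ultimately have "u \<in> A" "v \<in> A" using uC vC AB(1) by auto
      then show ?thesis using AB(4) by simp
    qed
  qed
qed


lemma comp_from_Nb:
  assumes sg: "simple_graph V E" and nt: "nontrivial V E" and nb: "Nb E"
    and CC: "C \<in> components V E"
  shows "regular_on E C \<or> biregular_on E C"
proof -
  obtain x where xV: "x \<in> V" and Cx: "C = component E x" using CC unfolding components_def by blast
  have "\<exists>x0. adjacent E x x0"
  proof (rule ccontr)
    assume na: "\<not> (\<exists>x0. adjacent E x x0)"
    have "component E x \<subseteq> {x}"
    proof
      fix y assume "y \<in> component E x"
      then have "(adjacent E)\<^sup>*\<^sup>* x y" unfolding component_def by simp
      then have "y = x"
      proof (induction rule: rtranclp_induct)
        case base then show ?case by simp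
      next
        case (step y z) then show ?case using na by simp
      qed
      then show "y \<in> {x}" by simp
    qed
    have "comp_edges E C = {}"
    proof (rule ccontr)
      assume "comp_edges E C \<noteq> {}"
      then obtain f where f: "f \<in> E" "f \<subseteq> C" unfolding comp_edges_def by blast
      obtain a b where ab: "f = {a, b}" "a \<noteq> b" using sg_edge[OF sg f(1)] by blast
      have "a \<in> {x}" "b \<in> {x}" using f(2) ab(1) Cx \<open>component E x \<subseteq> {x}\<close> by auto
      then show False using ab(2) by simp
    qed
    moreover have "card (comp_edges E C) \<ge> 2" using nt CC unfolding nontrivial_def by blast
    ultimately show False by simp
  qed
  then obtain x0 where x0: "adjacent E x x0" by blast
  define a where "a = degree E x"
  define b where "b = degree E x0"
  let ?P = "\<lambda>y. (degree E y = a \<and> (\<forall>z. adjacent E y z \<longrightarrow> degree E z = b)) \<or>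
                (degree E y = b \<and> (\<forall>z. adjacent E y z \<longrightarrow> degree E z = a))"
  have adjE: "\<And>y z. adjacent E y z \<Longrightarrow> {y, z} \<in> E" unfolding adjacent_def by blast
  have P: "?P y" if "y \<in> C" for y
  proof -
    have "(adjacent E)\<^sup>*\<^sup>* x y" using that Cx unfolding component_def by simp
    then show ?thesis
    proof (induction rule: rtranclp_induct)
      case base
      have "\<forall>z. adjacent E x z \<longrightarrow> degree E z = b"
      proof (intro allI impI)
        fix z assume "adjacent E x z"
        then show "degree E z = b" unfolding b_def
          using nb[unfolded Nb_def, rule_format, OF adjE adjE] x0 by blast
      qed
      then show ?case unfolding a_def by simp
    next
      case (step y z)
      have zy: "{z, y} \<in> E" using adjE[OF step.hyps(2)] by (simp add: insert_commute)
      have nbz: "\<And>z'. adjacent E z z' \<Longrightarrow> degree E z' = degree E y"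
        using nb[unfolded Nb_def, rule_format, OF adjE zy] by blast
      from step.IH show ?case
      proof
        assume h: "degree E y = a \<and> (\<forall>z. adjacent E y z \<longrightarrow> degree E z = b)"
        then have "degree E z = b" using step.hyps(2) by blast
        then show ?case using nbz h by simp
      next
        assume h: "degree E y = b \<and> (\<forall>z. adjacent E y z \<longrightarrow> degree E z = a)"
        then have "degree E z = a" using step.hyps(2) by blast
        then show ?case using nbz h by simp
      qed
    qed
  qed
  show ?thesis
  proof (cases "a = b")
    case True
    have "\<forall>v\<in>C. degree E v = a" using P True by blast
    then show ?thesis unfolding regular_on_def by blast
  next
    case False
    define A where "A = {y \<in> C. degree E y = a}"
    define B where "B = {y \<in> C. degree E y = b}"
    have "A \<union> B = C" unfolding A_def B_def using P by blast
    moreover have "A \<inter> B = {}" unfolding A_def B_def using False by auto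
    moreover have "\<forall>e \<in> comp_edges E C. card (e \<inter> A) = 1 \<and> card (e \<inter> B) = 1"
    proof
      fix e assume "e \<in> comp_edges E C"
      then have e: "e \<in> E" "e \<subseteq> C" unfolding comp_edges_def by auto
      obtain u v where uv: "e = {u, v}" "u \<noteq> v" using sg_edge[OF sg e(1)] by blast
      have uC: "u \<in> C" and vC: "v \<in> C" using e(2) uv(1) by auto
      have adj: "adjacent E u v" unfolding adjacent_def using uv e(1) by simp
      from P[OF uC] show "card (e \<inter> A) = 1 \<and> card (e \<inter> B) = 1"
      proof
        assume h: "degree E u = a \<and> (\<forall>z. adjacent E u z \<longrightarrow> degree E z = b)"
        then have dv: "degree E v = b" using adj by blast
        have "e \<inter> A = {u}" unfolding A_def uv(1) using h dv False uC by auto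
        moreover have "e \<inter> B = {v}" unfolding B_def uv(1) using h dv False vC by auto
        ultimately show ?thesis by simp
      next
        assume h: "degree E u = b \<and> (\<forall>z. adjacent E u z \<longrightarrow> degree E z = a)"
        then have dv: "degree E v = a" using adj by blast
        have "e \<inter> A = {v}" unfolding A_def uv(1) using h dv False vC by auto
        moreover have "e \<inter> B = {u}" unfolding B_def uv(1) using h dv False uC by auto
        ultimately show ?thesis by simp
      qed
    qed
    moreover have "\<forall>v\<in>A. degree E v = a" unfolding A_def by simp
    moreover have "\<forall>v\<in>B. degree E v = b" unfolding B_def by simp
    ultimately have "biregular_on E C" unfolding biregular_on_def by blast
    then show ?thesis by simp
  qed
qed


lemma pair_terms:
  assumes "e \<noteq> f"
  shows "real (\<Sum>u\<in>{e, f}. d u) = real (d e) + real (d f)"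
    and "(\<Sum>g\<in>{e, f}. 1 / (2 * real (d g))) = 1 / (2 * real (d e)) + 1 / (2 * real (d f))"
  using assms by simp_all

theorem corollary3p2:
  fixes V :: "'a set" and E :: "'a set set"
  assumes "simple_graph V E" and "nontrivial V E"
  shows "harmonic_index (line_graph_edges E) \<le> real (card E) / 2 \<and>
    (harmonic_index (line_graph_edges E) = real (card E) / 2 \<longleftrightarrow>
      (\<forall>C \<in> components V E. regular_on E C \<or> biregular_on E C))"
proof -
  note sg = assms(1) and nt = assms(2)
  define L where "L = line_graph_edges E"
  define d where "d = degree L"
  have fE: "finite E" using sg_finE[OF sg] .
  have fL: "finite L" unfolding L_def using finLE[OF fE] .
  have pos: "\<And>g. g \<in> E \<Longrightarrow> d g > 0" unfolding d_def L_def using dL_pos[OF sg nt] by blast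
  define t where "t F = 2 / real (\<Sum>u\<in>F. d u)" for F
  define h where "h F = (\<Sum>g\<in>F. 1 / (2 * real (d g)))" for F
  have H: "harmonic_index L = sum t L" unfolding harmonic_index_def t_def d_def by simp
  have Fsub: "F \<subseteq> E" if "F \<in> L" for F
    using that unfolding L_def by (rule LE_E) auto
  have "sum h L = (\<Sum>F\<in>L. \<Sum>g\<in>{g \<in> E. g \<in> F}. 1 / (2 * real (d g)))"
  proof (rule sum.cong)
    fix F assume "F \<in> L"
    then have "{g \<in> E. g \<in> F} = F" using Fsub by blast
    then show "h F = (\<Sum>g\<in>{g \<in> E. g \<in> F}. 1 / (2 * real (d g)))" unfolding h_def by simp
  qed simp
  also have "\<dots> = (\<Sum>g\<in>E. \<Sum>F\<in>{F \<in> L. g \<in> F}. 1 / (2 * real (d g)))"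
    by (rule sum.swap_restrict[OF fL fE])
  also have "\<dots> = (\<Sum>g\<in>E. real (d g) * (1 / (2 * real (d g))))"
    unfolding d_def degree_def by simp
  also have "\<dots> = (\<Sum>g\<in>E. 1 / 2)"
  proof (rule sum.cong)
    fix g assume "g \<in> E"
    then have "real (d g) > 0" using pos by simp
    then show "real (d g) * (1 / (2 * real (d g))) = 1 / 2" by simp
  qed simp
  also have "\<dots> = real (card E) / 2" by simp
  finally have sumh: "sum h L = real (card E) / 2" .
  define Q2 where "Q2 = (\<forall>e\<in>E. \<forall>f\<in>E. e \<noteq> f \<longrightarrow> e \<inter> f \<noteq> {} \<longrightarrow> d e = d f)"
  have pwF: "t F \<le> h F \<and> (t F = h F \<longleftrightarrow> (\<exists>e f. F = {e, f} \<and> d e = d f))" if FL0: "F \<in> L" for F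
  proof -
    obtain e f where ef: "F = {e, f}" "e \<in> E" "f \<in> E" "e \<noteq> f" "e \<inter> f \<noteq> {}"
      by (rule LE_E[OF FL0[unfolded L_def]])
    have tF: "t F = 2 / (real (d e) + real (d f))" unfolding t_def ef(1) using pair_terms(1)[OF ef(4)] by simp
    have hF: "h F = 1 / (2 * real (d e)) + 1 / (2 * real (d f))" unfolding h_def ef(1) using pair_terms(2)[OF ef(4)] by simp
    have p: "2 / (real (d e) + real (d f)) \<le> 1 / (2 * real (d e)) + 1 / (2 * real (d f)) \<and>
       (2 / (real (d e) + real (d f)) = 1 / (2 * real (d e)) + 1 / (2 * real (d f)) \<longleftrightarrow> real (d e) = real (d f))"
      by (rule pw) (use pos ef in auto)
    have "(\<exists>e' f'. F = {e', f'} \<and> d e' = d f') \<longleftrightarrow> d e = d f"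
    proof
      assume "\<exists>e' f'. F = {e', f'} \<and> d e' = d f'"
      then obtain e' f' where "F = {e', f'}" "d e' = d f'" by blast
      then show "d e = d f" using ef(1) by (auto simp: doubleton_eq_iff)
    qed (use ef(1) in blast)
    then show ?thesis using p tF hF by simp
  qed
  have teq: "(\<forall>F\<in>L. t F = h F) \<longleftrightarrow> Q2"
  proof
    assume a: "\<forall>F\<in>L. t F = h F"
    show Q2 unfolding Q2_def
    proof (intro ballI impI)
      fix e f assume e: "e \<in> E" and f: "f \<in> E" and ne: "e \<noteq> f" and i: "e \<inter> f \<noteq> {}"
      have FL: "{e, f} \<in> L" unfolding L_def by (rule LE_I[OF e f ne i])
      have "t {e, f} = h {e, f}" using a FL by blast
      then have "\<exists>e' f'. {e, f} = {e', f'} \<and> d e' = d f'" by (rule iffD1[OF conjunct2[OF pwF[OF FL]]])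
      then obtain e' f' where "{e, f} = {e', f'}" "d e' = d f'" by blast
      then show "d e = d f" by (auto simp: doubleton_eq_iff)
    qed
  next
    assume q: Q2
    show "\<forall>F\<in>L. t F = h F"
    proof
      fix F assume FL: "F \<in> L"
      obtain e f where ef: "F = {e, f}" "e \<in> E" "f \<in> E" "e \<noteq> f" "e \<inter> f \<noteq> {}"
        by (rule LE_E[OF FL[unfolded L_def]])
      have "d e = d f" using q[unfolded Q2_def, rule_format, OF ef(2) ef(3) ef(4) ef(5)] .
      then have "\<exists>e' f'. F = {e', f'} \<and> d e' = d f'" using ef(1) by blast
      then show "t F = h F" by (rule iffD2[OF conjunct2[OF pwF[OF FL]]])
    qed
  qed
  have le: "sum t L \<le> sum h L" by (rule sum_mono) (use pwF in blast)
  have "sum h L - sum t L = (\<Sum>F\<in>L. h F - t F)" by (simp add: sum_subtractf)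
  moreover have "(\<Sum>F\<in>L. h F - t F) = 0 \<longleftrightarrow> (\<forall>F\<in>L. h F - t F = 0)"
    by (rule sum_nonneg_eq_0_iff[OF fL]) (use pwF in auto)
  ultimately have e1: "sum h L - sum t L = 0 \<longleftrightarrow> (\<forall>F\<in>L. h F - t F = 0)" by simp
  have e2: "sum t L = sum h L \<longleftrightarrow> sum h L - sum t L = 0" by (rule iffI) simp_all
  have e3: "(\<forall>F\<in>L. h F - t F = 0) \<longleftrightarrow> (\<forall>F\<in>L. t F = h F)" by auto
  have eqiff: "sum t L = sum h L \<longleftrightarrow> (\<forall>F\<in>L. t F = h F)" using e1 e2 e3 by blast
  have "Q2 \<longleftrightarrow> Nb E" unfolding Q2_def d_def L_def by (rule Q2_Nb[OF sg])
  moreover have "Nb E \<longleftrightarrow> (\<forall>C \<in> components V E. regular_on E C \<or> biregular_on E C)"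
  proof
    assume "Nb E"
    then show "\<forall>C \<in> components V E. regular_on E C \<or> biregular_on E C"
      using comp_from_Nb[OF sg nt] by blast
  next
    assume "\<forall>C \<in> components V E. regular_on E C \<or> biregular_on E C"
    then show "Nb E" by (rule Nb_from_comp[OF sg])
  qed
  ultimately have fin: "(\<forall>F\<in>L. t F = h F) \<longleftrightarrow> (\<forall>C \<in> components V E. regular_on E C \<or> biregular_on E C)"
    using teq by simp
  have HL: "harmonic_index (line_graph_edges E) = sum t L" using H unfolding L_def .
  show ?thesis unfolding HL sumh[symmetric] using le eqiff fin by simp
qed

end
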